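(* Let $(W,M)$ be a reachable Kripke structure over an $\mathsf{HFOL}$ signature $\Delta$. Let $(W,N)$ be a Kripke structure obtained from $(W,M)$ by (a) replacing unreachable elements of flexible sorts by some new elements, (b) preserving the interpretation of function and relation symbols on the elements inherited from $(W,M)$, and (c) interpreting function symbols arbitrarily on the new arguments. Then $(W,M)\equiv(W,N)$, i.e. $(W,M)\models\varphi$ iff $(W,N)\models\varphi$ for all $\Delta$-sentences $\varphi$.
   Context: Hybrid first-order logic with rigid symbols ($\mathsf{HFOL}$). A signature is $\Delta=(\Sigma^{\mathtt n},\Sigma^{\mathtt r}\subseteq\Sigma)$ with $\Sigma=(S,F,P)$ a many-sorted first-order signature, $\Sigma^{\mathtt r}\subseteq\Sigma$ the rigid symbols, and $\Sigma^{\mathtt n}$ single-sorted (sort $\mathtt n$) with constants $F^{\mathtt n}$ (nominals) and unary/binary relations (modalities); sorts of $S\setminus S^{\mathtt r}$ are flexible. A Kripke structure $(W,M)$: a $\Sigma^{\mathtt n}$-structure $W$ with nonempty world set $|W|$ and $\Sigma$-structures $M_w$ all with the same reduct to $\Sigma^{\mathtt r}$. Hybrid terms use $\Sigma$-symbols and symbols $@_k\sigma$ ($k$ nominal, $\sigma$ flexible; $@_k x=x$ for rigid $x$), with $M_{w,(@_k\sigma)(t)}=M_{W_k,\sigma}(M_{w,t})$; rigid hybrid terms are built only from $@_k\sigma$-symbols and have sort $@_k s$. Sentences: atoms $k$, $\varrho$, $t_1=t_2$, $\varpi(t)$ (hybrid terms), closed under $@_k$, $\neg$, finite $\vee$, $\downarrow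 z$ (store, $z$ nominal variable), $\exists X$ ($X$ variables of rigid sorts or of sort $\mathtt n$), $\langle\lambda\rangle$ (binary modality), with the standard local Kripke semantics; $(W,M)\models\varphi$ (global) means $\varphi$ holds at all worlds. An element $e\in M_{w,s}$ is reachable if $w=W_k$ and $e=M_{w,t}$ for some nominal $k$ and rigid hybrid term $t$ of sort $@_k s$. $(W,M)$ is reachable if every world is the denotation of a nominal and every element of a rigid sort is the denotation of a rigid hybrid term. *)

theory Defs
  imports Main
begin

text \<open>A signature Delta = (Sigma^n, Sigma^r \<subseteq> Sigma).  Sigma = (S,F,P) is many-sorted;
  a function symbol carries its arity and result sort (overloaded symbols are
  encoded by distinct elements of the symbol type).\<close>

record ('s,'f,'p,'k,'r,'l) hsig =
  Srt   :: "'s set"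
  RSrt  :: "'s set"
  Fun   :: "'f set"
  RFun  :: "'f set"
  arity :: "'f \<Rightarrow> 's list"
  res   :: "'f \<Rightarrow> 's"
  Pred  :: "'p set"
  RPred :: "'p set"
  parity :: "'p \<Rightarrow> 's list"
  Nom   :: "'k set"
  Prop  :: "'r set"
  Mdl   :: "'l set"

definition wf_hsig :: "('s,'f,'p,'k,'r,'l) hsig \<Rightarrow> bool" where
  "wf_hsig D \<longleftrightarrow>
     RSrt D \<subseteq> Srt D \<and> RFun D \<subseteq> Fun D \<and> RPred D \<subseteq> Pred D \<and>
     (\<forall>\<sigma>\<in>Fun D. set (arity D \<sigma>) \<subseteq> Srt D \<and> res D \<sigma> \<in> Srt D) \<and>
     (\<forall>\<pi>\<in>Pred D. set (parity D \<pi>) \<subseteq> Srt D) \<and>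
     (\<forall>\<sigma>\<in>RFun D. set (arity D \<sigma>) \<subseteq> RSrt D \<and> res D \<sigma> \<in> RSrt D) \<and>
     (\<forall>\<pi>\<in>RPred D. set (parity D \<pi>) \<subseteq> RSrt D)"

record ('k,'r,'l,'w) nstruct =
  Wor :: "'w set"
  nom :: "'k \<Rightarrow> 'w"
  prp :: "'r \<Rightarrow> 'w set"
  acc :: "'l \<Rightarrow> ('w \<times> 'w) set"

record ('s,'f,'p,'u) fstruct =
  car  :: "'s \<Rightarrow> 'u set"
  fint :: "'f \<Rightarrow> 'u list \<Rightarrow> 'u"
  pint :: "'p \<Rightarrow> 'u list set"

definition args_in :: "('s \<Rightarrow> 'u set) \<Rightarrow> 'u list \<Rightarrow> 's list \<Rightarrow> bool" where
  "args_in C as ss \<longleftrightarrow> list_all2 (\<lambda>a s. a \<in> C s) as ss"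

definition sig_struct :: "('s,'f,'p,'k,'r,'l) hsig \<Rightarrow> ('s,'f,'p,'u) fstruct \<Rightarrow> bool" where
  "sig_struct D A \<longleftrightarrow>
     (\<forall>\<sigma>\<in>Fun D. \<forall>as. args_in (car A) as (arity D \<sigma>) \<longrightarrow> fint A \<sigma> as \<in> car A (res D \<sigma>)) \<and>
     (\<forall>\<pi>\<in>Pred D. \<forall>as\<in>pint A \<pi>. args_in (car A) as (parity D \<pi>))"

definition kripke :: "('s,'f,'p,'k,'r,'l) hsig \<Rightarrow> ('k,'r,'l,'w) nstruct
                      \<Rightarrow> ('w \<Rightarrow> ('s,'f,'p,'u) fstruct) \<Rightarrow> bool" where
  "kripke D W M \<longleftrightarrow>
     Wor W \<noteq> {} \<and>
     (\<forall>k\<in>Nom D. nom W k \<in> Wor W) \<and>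
     (\<forall>\<rho>\<in>Prop D. prp W \<rho> \<subseteq> Wor W) \<and>
     (\<forall>lm\<in>Mdl D. acc W lm \<subseteq> Wor W \<times> Wor W) \<and>
     (\<forall>w\<in>Wor W. sig_struct D (M w)) \<and>
     (\<forall>w\<in>Wor W. \<forall>w'\<in>Wor W.
        (\<forall>s\<in>RSrt D. car (M w) s = car (M w') s) \<and>
        (\<forall>\<sigma>\<in>RFun D. \<forall>as. args_in (car (M w)) as (arity D \<sigma>) \<longrightarrow>
             fint (M w) \<sigma> as = fint (M w') \<sigma> as) \<and>
        (\<forall>\<pi>\<in>RPred D. pint (M w) \<pi> = pint (M w') \<pi>))"

datatype ('k,'v) nterm = NC 'k | NV 'v

text \<open>Hybrid terms: variables (of rigid sorts), Sigma-function symbols applied at the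
  current world, and symbols  at_k sigma  for flexible sigma.\<close>
datatype ('f,'k,'v,'s) htrm =
    Var 'v 's
  | Fn 'f "('f,'k,'v,'s) htrm list"
  | AtFn "('k,'v) nterm" 'f "('f,'k,'v,'s) htrm list"

text \<open>Sorts of hybrid terms: an ordinary sort s, or  at_k s  (for flexible s).\<close>
datatype ('s,'k,'v) hsrt = Here 's | There "('k,'v) nterm" 's

definition srt_at :: "('s,'f,'p,'k,'r,'l) hsig \<Rightarrow> ('k,'v) nterm \<Rightarrow> 's \<Rightarrow> ('s,'k,'v) hsrt" where
  "srt_at D k s = (if s \<in> RSrt D then Here s else There k s)"

fun nterm_ok :: "('s,'f,'p,'k,'r,'l) hsig \<Rightarrow> ('k,'v) nterm \<Rightarrow> bool" where
  "nterm_ok D (NC k) = (k \<in> Nom D)"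
| "nterm_ok D (NV z) = True"

fun tsort :: "('s,'f,'p,'k,'r,'l) hsig \<Rightarrow> ('f,'k,'v,'s) htrm \<Rightarrow> ('s,'k,'v) hsrt option" where
  "tsort D (Var x s) = (if s \<in> RSrt D then Some (Here s) else None)"
| "tsort D (Fn \<sigma> ts) =
     (if \<sigma> \<in> Fun D \<and> map (tsort D) ts = map (\<lambda>s. Some (Here s)) (arity D \<sigma>)
      then Some (Here (res D \<sigma>)) else None)"
| "tsort D (AtFn k \<sigma> ts) =
     (if \<sigma> \<in> Fun D - RFun D \<and> nterm_ok D k \<and>
         map (tsort D) ts = map (\<lambda>s. Some (srt_at D k s)) (arity D \<sigma>)
      then Some (srt_at D k (res D \<sigma>)) else None)"

text \<open>Rigid hybrid terms: ground terms built only from symbols at_k sigma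
  (with at_k sigma = sigma for rigid sigma) and nominal constants.\<close>
fun rigid_trm :: "('s,'f,'p,'k,'r,'l) hsig \<Rightarrow> ('f,'k,'v,'s) htrm \<Rightarrow> bool" where
  "rigid_trm D (Var x s) = False"
| "rigid_trm D (Fn \<sigma> ts) = (\<sigma> \<in> RFun D \<and> (\<forall>t\<in>set ts. rigid_trm D t))"
| "rigid_trm D (AtFn k \<sigma> ts) = ((\<exists>c. k = NC c) \<and> (\<forall>t\<in>set ts. rigid_trm D t))"

datatype ('f,'p,'k,'r,'l,'v,'s) hfm =
    NomA "('k,'v) nterm"
  | PropA 'r
  | Eq "('f,'k,'v,'s) htrm" "('f,'k,'v,'s) htrm"
  | PredA 'p "('f,'k,'v,'s) htrm list"
  | AtPredA "('k,'v) nterm" 'p "('f,'k,'v,'s) htrm list"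
  | AtF "('k,'v) nterm" "('f,'p,'k,'r,'l,'v,'s) hfm"
  | Neg "('f,'p,'k,'r,'l,'v,'s) hfm"
  | Disj "('f,'p,'k,'r,'l,'v,'s) hfm list"
  | Store 'v "('f,'p,'k,'r,'l,'v,'s) hfm"
  | ExN 'v "('f,'p,'k,'r,'l,'v,'s) hfm"
  | ExV 'v 's "('f,'p,'k,'r,'l,'v,'s) hfm"
  | Dia 'l "('f,'p,'k,'r,'l,'v,'s) hfm"

fun wf_fm :: "('s,'f,'p,'k,'r,'l) hsig \<Rightarrow> ('f,'p,'k,'r,'l,'v,'s) hfm \<Rightarrow> bool" where
  "wf_fm D (NomA k) = nterm_ok D k"
| "wf_fm D (PropA \<rho>) = (\<rho> \<in> Prop D)"
| "wf_fm D (Eq t1 t2) = (tsort D t1 \<noteq> None \<and> tsort D t1 = tsort D t2)"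
| "wf_fm D (PredA \<pi> ts) = (\<pi> \<in> Pred D \<and> map (tsort D) ts = map (\<lambda>s. Some (Here s)) (parity D \<pi>))"
| "wf_fm D (AtPredA k \<pi> ts) = (\<pi> \<in> Pred D - RPred D \<and> nterm_ok D k \<and>
       map (tsort D) ts = map (\<lambda>s. Some (srt_at D k s)) (parity D \<pi>))"
| "wf_fm D (AtF k \<phi>) = (nterm_ok D k \<and> wf_fm D \<phi>)"
| "wf_fm D (Neg \<phi>) = wf_fm D \<phi>"
| "wf_fm D (Disj \<phi>s) = (\<forall>\<phi>\<in>set \<phi>s. wf_fm D \<phi>)"
| "wf_fm D (Store z \<phi>) = wf_fm D \<phi>"
| "wf_fm D (ExN z \<phi>) = wf_fm D \<phi>"
| "wf_fm D (ExV x s \<phi>) = (s \<in> RSrt D \<and> wf_fm D \<phi>)"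
| "wf_fm D (Dia lm \<phi>) = (lm \<in> Mdl D \<and> wf_fm D \<phi>)"

fun fvn_nt :: "('k,'v) nterm \<Rightarrow> 'v set" where
  "fvn_nt (NC k) = {}"
| "fvn_nt (NV z) = {z}"

fun fvn_t :: "('f,'k,'v,'s) htrm \<Rightarrow> 'v set" where
  "fvn_t (Var x s) = {}"
| "fvn_t (Fn \<sigma> ts) = (\<Union>t\<in>set ts. fvn_t t)"
| "fvn_t (AtFn k \<sigma> ts) = fvn_nt k \<union> (\<Union>t\<in>set ts. fvn_t t)"

fun fve_t :: "('f,'k,'v,'s) htrm \<Rightarrow> ('v \<times> 's) set" where
  "fve_t (Var x s) = {(x, s)}"
| "fve_t (Fn \<sigma> ts) = (\<Union>t\<in>set ts. fve_t t)"
| "fve_t (AtFn k \<sigma> ts) = (\<Union>t\<in>set ts. fve_t t)"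

fun fvn :: "('f,'p,'k,'r,'l,'v,'s) hfm \<Rightarrow> 'v set" where
  "fvn (NomA k) = fvn_nt k"
| "fvn (PropA \<rho>) = {}"
| "fvn (Eq t1 t2) = fvn_t t1 \<union> fvn_t t2"
| "fvn (PredA \<pi> ts) = (\<Union>t\<in>set ts. fvn_t t)"
| "fvn (AtPredA k \<pi> ts) = fvn_nt k \<union> (\<Union>t\<in>set ts. fvn_t t)"
| "fvn (AtF k \<phi>) = fvn_nt k \<union> fvn \<phi>"
| "fvn (Neg \<phi>) = fvn \<phi>"
| "fvn (Disj \<phi>s) = (\<Union>\<phi>\<in>set \<phi>s. fvn \<phi>)"
| "fvn (Store z \<phi>) = fvn \<phi> - {z}"
| "fvn (ExN z \<phi>) = fvn \<phi> - {z}"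
| "fvn (ExV x s \<phi>) = fvn \<phi>"
| "fvn (Dia lm \<phi>) = fvn \<phi>"

fun fve :: "('f,'p,'k,'r,'l,'v,'s) hfm \<Rightarrow> ('v \<times> 's) set" where
  "fve (NomA k) = {}"
| "fve (PropA \<rho>) = {}"
| "fve (Eq t1 t2) = fve_t t1 \<union> fve_t t2"
| "fve (PredA \<pi> ts) = (\<Union>t\<in>set ts. fve_t t)"
| "fve (AtPredA k \<pi> ts) = (\<Union>t\<in>set ts. fve_t t)"
| "fve (AtF k \<phi>) = fve \<phi>"
| "fve (Neg \<phi>) = fve \<phi>"
| "fve (Disj \<phi>s) = (\<Union>\<phi>\<in>set \<phi>s. fve \<phi>)"
| "fve (Store z \<phi>) = fve \<phi>"
| "fve (ExN z \<phi>) = fve \<phi>"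
| "fve (ExV x s \<phi>) = fve \<phi> - {(x, s)}"
| "fve (Dia lm \<phi>) = fve \<phi>"

definition sentence :: "('s,'f,'p,'k,'r,'l) hsig \<Rightarrow> ('f,'p,'k,'r,'l,'v,'s) hfm \<Rightarrow> bool" where
  "sentence D \<phi> \<longleftrightarrow> wf_fm D \<phi> \<and> fvn \<phi> = {} \<and> fve \<phi> = {}"

fun nval :: "('k,'r,'l,'w) nstruct \<Rightarrow> ('v \<Rightarrow> 'w) \<Rightarrow> ('k,'v) nterm \<Rightarrow> 'w" where
  "nval W \<nu> (NC k) = nom W k"
| "nval W \<nu> (NV z) = \<nu> z"

fun eval :: "('k,'r,'l,'w) nstruct \<Rightarrow> ('w \<Rightarrow> ('s,'f,'p,'u) fstruct) \<Rightarrow> ('v \<Rightarrow> 'w)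
             \<Rightarrow> ('v \<times> 's \<Rightarrow> 'u) \<Rightarrow> 'w \<Rightarrow> ('f,'k,'v,'s) htrm \<Rightarrow> 'u" where
  "eval W M \<nu> \<mu> w (Var x s) = \<mu> (x, s)"
| "eval W M \<nu> \<mu> w (Fn \<sigma> ts) = fint (M w) \<sigma> (map (eval W M \<nu> \<mu> w) ts)"
| "eval W M \<nu> \<mu> w (AtFn k \<sigma> ts) = fint (M (nval W \<nu> k)) \<sigma> (map (eval W M \<nu> \<mu> w) ts)"

fun sat :: "('k,'r,'l,'w) nstruct \<Rightarrow> ('w \<Rightarrow> ('s,'f,'p,'u) fstruct) \<Rightarrow> ('v \<Rightarrow> 'w)
            \<Rightarrow> ('v \<times> 's \<Rightarrow> 'u) \<Rightarrow> 'w \<Rightarrow> ('f,'p,'k,'r,'l,'v,'s) hfm \<Rightarrow> bool" where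
  "sat W M \<nu> \<mu> w (NomA k) = (w = nval W \<nu> k)"
| "sat W M \<nu> \<mu> w (PropA \<rho>) = (w \<in> prp W \<rho>)"
| "sat W M \<nu> \<mu> w (Eq t1 t2) = (eval W M \<nu> \<mu> w t1 = eval W M \<nu> \<mu> w t2)"
| "sat W M \<nu> \<mu> w (PredA \<pi> ts) = (map (eval W M \<nu> \<mu> w) ts \<in> pint (M w) \<pi>)"
| "sat W M \<nu> \<mu> w (AtPredA k \<pi> ts) = (map (eval W M \<nu> \<mu> w) ts \<in> pint (M (nval W \<nu> k)) \<pi>)"
| "sat W M \<nu> \<mu> w (AtF k \<phi>) = sat W M \<nu> \<mu> (nval W \<nu> k) \<phi>"
| "sat W M \<nu> \<mu> w (Neg \<phi>) = (\<not> sat W M \<nu> \<mu> w \<phi>)"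
| "sat W M \<nu> \<mu> w (Disj \<phi>s) = (\<exists>\<phi>\<in>set \<phi>s. sat W M \<nu> \<mu> w \<phi>)"
| "sat W M \<nu> \<mu> w (Store z \<phi>) = sat W M (\<nu>(z := w)) \<mu> w \<phi>"
| "sat W M \<nu> \<mu> w (ExN z \<phi>) = (\<exists>v\<in>Wor W. sat W M (\<nu>(z := v)) \<mu> w \<phi>)"
| "sat W M \<nu> \<mu> w (ExV x s \<phi>) = (\<exists>a\<in>car (M w) s. sat W M \<nu> (\<mu>((x, s) := a)) w \<phi>)"
| "sat W M \<nu> \<mu> w (Dia lm \<phi>) = (\<exists>v. (w, v) \<in> acc W lm \<and> sat W M \<nu> \<mu> v \<phi>)"

text \<open>Global satisfaction of a sentence (valuations are irrelevant for sentences).\<close>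
definition models :: "('k,'r,'l,'w) nstruct \<Rightarrow> ('w \<Rightarrow> ('s,'f,'p,'u) fstruct)
                      \<Rightarrow> ('f,'p,'k,'r,'l,'v,'s) hfm \<Rightarrow> bool" where
  "models W M \<phi> \<longleftrightarrow> (\<forall>w\<in>Wor W. sat W M (\<lambda>_. undefined) (\<lambda>_. undefined) w \<phi>)"

definition reachable_el :: "('s,'f,'p,'k,'r,'l) hsig \<Rightarrow> ('k,'r,'l,'w) nstruct
      \<Rightarrow> ('w \<Rightarrow> ('s,'f,'p,'u) fstruct) \<Rightarrow> 'w \<Rightarrow> 's \<Rightarrow> 'u \<Rightarrow> bool" where
  "reachable_el D W M w s e \<longleftrightarrow>
     (\<exists>k\<in>Nom D. w = nom W k \<and>
        (\<exists>t :: ('f,'k,'k,'s) htrm. rigid_trm D t \<and> tsort D t = Some (srt_at D (NC k) s) \<and>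
             e = eval W M (\<lambda>_. undefined) (\<lambda>_. undefined) w t))"

definition reachable :: "('s,'f,'p,'k,'r,'l) hsig \<Rightarrow> ('k,'r,'l,'w) nstruct
      \<Rightarrow> ('w \<Rightarrow> ('s,'f,'p,'u) fstruct) \<Rightarrow> bool" where
  "reachable D W M \<longleftrightarrow>
     (\<forall>w\<in>Wor W. \<exists>k\<in>Nom D. nom W k = w) \<and>
     (\<forall>w\<in>Wor W. \<forall>s\<in>RSrt D. \<forall>e\<in>car (M w) s. reachable_el D W M w s e)"

definition replaces_unreachable :: "('s,'f,'p,'k,'r,'l) hsig \<Rightarrow> ('k,'r,'l,'w) nstruct
      \<Rightarrow> ('w \<Rightarrow> ('s,'f,'p,'u) fstruct) \<Rightarrow> ('w \<Rightarrow> ('s,'f,'p,'u) fstruct) \<Rightarrow> bool" where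
  "replaces_unreachable D W M N \<longleftrightarrow>
     (\<forall>w\<in>Wor W. \<forall>s\<in>RSrt D. car (N w) s = car (M w) s) \<and>
     (\<forall>w\<in>Wor W. \<forall>s\<in>Srt D - RSrt D.
        car (N w) s \<inter> car (M w) s = {e \<in> car (M w) s. reachable_el D W M w s e}) \<and>
     (\<forall>w\<in>Wor W. \<forall>\<sigma>\<in>Fun D. \<forall>as.
        args_in (\<lambda>s. car (M w) s \<inter> car (N w) s) as (arity D \<sigma>) \<longrightarrow>
        fint (N w) \<sigma> as = fint (M w) \<sigma> as) \<and>
     (\<forall>w\<in>Wor W. \<forall>\<pi>\<in>Pred D. \<forall>as.
        args_in (\<lambda>s. car (M w) s \<inter> car (N w) s) as (parity D \<pi>) \<longrightarrow>
        (as \<in> pint (N w) \<pi> \<longleftrightarrow> as \<in> pint (M w) \<pi>))"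

end

theory Submission
  imports Defs
begin

fun retag :: "'k \<Rightarrow> 'k \<Rightarrow> ('f,'k,'v,'s) htrm \<Rightarrow> ('f,'k,'v,'s) htrm" where
  "retag k1 k2 (Var x s) = Var x s"
| "retag k1 k2 (Fn \<sigma> ts) = Fn \<sigma> (map (retag k1 k2) ts)"
| "retag k1 k2 (AtFn k \<sigma> ts) = AtFn (if k = NC k1 then NC k2 else k) \<sigma> (map (retag k1 k2) ts)"

definition rs :: "'k \<Rightarrow> 'k \<Rightarrow> ('s,'k,'v) hsrt \<Rightarrow> ('s,'k,'v) hsrt" where
  "rs k1 k2 \<tau> = (case \<tau> of Here s \<Rightarrow> Here s | There k s \<Rightarrow> (if k = NC k1 then There (NC k2) s else There k s))"

lemma eval_retag:
  assumes "nom W k1 = nom W k2"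
  shows "eval W M \<nu> \<mu> w (retag k1 k2 t) = eval W M \<nu> \<mu> w t"
  using assms by (induction t) (simp_all add: comp_def cong: map_cong)

lemma rigid_retag: "rigid_trm D t \<Longrightarrow> rigid_trm D (retag k1 k2 t)"
  by (induction t) auto

lemma map_tsort_retag:
  assumes IH: "\<And>t \<tau>. t \<in> set ts \<Longrightarrow> tsort D t = Some \<tau> \<Longrightarrow> tsort D (retag k1 k2 t) = Some (rs k1 k2 \<tau>)"
    and m: "map (tsort D) ts = map (\<lambda>s. Some (f s)) ss"
  shows "map (tsort D) (map (retag k1 k2) ts) = map (\<lambda>s. Some (rs k1 k2 (f s))) ss"
proof -
  have "\<forall>t\<in>set ts. \<exists>\<tau>. tsort D t = Some \<tau>"
  proof
    fix t assume "t \<in> set ts"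
    then have "tsort D t \<in> set (map (tsort D) ts)" by simp
    then show "\<exists>\<tau>. tsort D t = Some \<tau>" using m by auto
  qed
  then have "map (tsort D) (map (retag k1 k2) ts) = map (map_option (rs k1 k2)) (map (tsort D) ts)"
    using IH by (auto intro!: map_cong)
  also have "\<dots> = map (\<lambda>s. Some (rs k1 k2 (f s))) ss" using m by simp
  finally show ?thesis .
qed

lemma tsort_retag:
  assumes "k2 \<in> Nom D"
  shows "tsort D t = Some \<tau> \<Longrightarrow> tsort D (retag k1 k2 t) = Some (rs k1 k2 \<tau>)"
proof (induction t arbitrary: \<tau>)
  case (Var x s) then show ?case by (auto simp: rs_def split: if_splits)
next
  case (Fn \<sigma> ts)
  have c: "\<sigma> \<in> Fun D" "map (tsort D) ts = map (\<lambda>s. Some (Here s)) (arity D \<sigma>)" "\<tau> = Here (res D \<sigma>)"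
    using Fn.prems by (auto split: if_splits)
  have "map (tsort D) (map (retag k1 k2) ts) = map (\<lambda>s. Some (rs k1 k2 (Here s))) (arity D \<sigma>)"
    by (rule map_tsort_retag[OF Fn.IH c(2)])
  then show ?case using c by (simp add: rs_def)
next
  case (AtFn k \<sigma> ts)
  have c: "\<sigma> \<in> Fun D - RFun D" "nterm_ok D k" "map (tsort D) ts = map (\<lambda>s. Some (srt_at D k s)) (arity D \<sigma>)"
     "\<tau> = srt_at D k (res D \<sigma>)"
    using AtFn.prems by (auto split: if_splits)
  have m: "map (tsort D) (map (retag k1 k2) ts) = map (\<lambda>s. Some (rs k1 k2 (srt_at D k s))) (arity D \<sigma>)"
    by (rule map_tsort_retag[OF AtFn.IH c(3)])
  have e: "rs k1 k2 (srt_at D k s) = srt_at D (if k = NC k1 then NC k2 else k) s" for s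
    by (auto simp: rs_def srt_at_def)
  have "nterm_ok D (if k = NC k1 then NC k2 else k)" using c(2) assms by auto
  then show ?case using c m e by simp
qed


definition hw :: "('k,'r,'l,'w) nstruct \<Rightarrow> ('v \<Rightarrow> 'w) \<Rightarrow> 'w \<Rightarrow> ('s,'k,'v) hsrt \<Rightarrow> 'w \<times> 's" where
  "hw W \<nu> w \<tau> = (case \<tau> of Here s \<Rightarrow> (w, s) | There k s \<Rightarrow> (nval W \<nu> k, s))"

lemma choose_terms:
  assumes "list_all2 (\<lambda>a s. \<exists>t. P t \<and> tsort D t = Some (f s) \<and> ev t = a) as ss"
  shows "\<exists>ts. (\<forall>t\<in>set ts. P t) \<and> map (tsort D) ts = map (\<lambda>s. Some (f s)) ss \<and> map ev ts = as"
  using assms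
proof (induction as ss rule: list_all2_induct)
  case Nil then show ?case by auto
next
  case (Cons a as s ss)
  then obtain t ts where "P t" "tsort D t = Some (f s)" "ev t = a"
    "(\<forall>t\<in>set ts. P t)" "map (tsort D) ts = map (\<lambda>s. Some (f s)) ss" "map ev ts = as" by blast
  then show ?case by (intro exI[of _ "t # ts"]) auto
qed

locale hsetup =
  fixes D :: "('s,'f,'p,'k,'r,'l) hsig"
    and W :: "('k,'r,'l,'w) nstruct"
    and M N :: "'w \<Rightarrow> ('s,'f,'p,'u) fstruct"
  assumes wf: "wf_hsig D"
    and kM: "kripke D W M"
    and rM: "reachable D W M"
    and kN: "kripke D W N"
    and ru: "replaces_unreachable D W M N"
begin

abbreviation G where "G w s \<equiv> car (M w) s \<inter> car (N w) s"

lemma G_rigid: "s \<in> RSrt D \<Longrightarrow> w \<in> Wor W \<Longrightarrow> w' \<in> Wor W \<Longrightarrow> G w s = G w' s"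
  using kM kN unfolding kripke_def by metis

lemma G_rigidM: "s \<in> RSrt D \<Longrightarrow> w \<in> Wor W \<Longrightarrow> G w s = car (M w) s"
  using ru unfolding replaces_unreachable_def by auto

lemma reach_k:
  assumes "w \<in> Wor W" "s \<in> Srt D" "a \<in> G w s" "k \<in> Nom D" "nom W k = w"
  shows "\<exists>t :: ('f,'k,'k,'s) htrm. rigid_trm D t \<and> tsort D t = Some (srt_at D (NC k) s) \<and>
           eval W M (\<lambda>_. undefined) (\<lambda>_. undefined) w t = a"
proof (cases "s \<in> RSrt D")
  case True
  then have "reachable_el D W M w s a" using rM assms unfolding reachable_def by auto
  then show ?thesis using True unfolding reachable_el_def by (auto simp: srt_at_def)
next
  case False
  then have "reachable_el D W M w s a" using ru assms unfolding replaces_unreachable_def by blast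
  then obtain k0 t where k0: "k0 \<in> Nom D" "w = nom W k0" and t: "rigid_trm D (t :: ('f,'k,'k,'s) htrm)"
    "tsort D t = Some (srt_at D (NC k0) s)" "eval W M (\<lambda>_. undefined) (\<lambda>_. undefined) w t = a"
    unfolding reachable_el_def by blast
  show ?thesis
  proof (intro exI conjI)
    show "rigid_trm D (retag k0 k t)" by (rule rigid_retag[OF t(1)])
    show "tsort D (retag k0 k t) = Some (srt_at D (NC k) s)"
      using tsort_retag[OF assms(4) t(2)] False by (simp add: rs_def srt_at_def)
    show "eval W M (\<lambda>_. undefined) (\<lambda>_. undefined) w (retag k0 k t) = a"
    proof -
      have "nom W k0 = nom W k" using k0 assms by simp
      from eval_retag[of W k0 k, OF this] t(3) show ?thesis by metis
    qed
  qed
qed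

lemma closure:
  assumes "w \<in> Wor W" "\<sigma> \<in> Fun D" "args_in (G w) as (arity D \<sigma>)"
  shows "fint (M w) \<sigma> as \<in> G w (res D \<sigma>) \<and> fint (N w) \<sigma> as = fint (M w) \<sigma> as"
proof
  show "fint (N w) \<sigma> as = fint (M w) \<sigma> as" using ru assms unfolding replaces_unreachable_def by blast
next
  have aM: "args_in (car (M w)) as (arity D \<sigma>)" using assms(3) unfolding args_in_def
    by (auto elim: list_all2_mono)
  then have inM: "fint (M w) \<sigma> as \<in> car (M w) (res D \<sigma>)"
    using kM assms unfolding kripke_def sig_struct_def by blast
  have resS: "res D \<sigma> \<in> Srt D" using wf assms unfolding wf_hsig_def by blast
  show "fint (M w) \<sigma> as \<in> G w (res D \<sigma>)"
  proof (cases "res D \<sigma> \<in> RSrt D")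
    case True then show ?thesis using G_rigidM assms inM by auto
  next
    case False
    then have nR: "\<sigma> \<notin> RFun D" using wf unfolding wf_hsig_def by blast
    obtain k where k: "k \<in> Nom D" "nom W k = w" using rM assms unfolding reachable_def by blast
    have "list_all2 (\<lambda>a s. \<exists>t. rigid_trm D (t :: ('f,'k,'k,'s) htrm) \<and> tsort D t = Some (srt_at D (NC k) s) \<and>
           eval W M (\<lambda>_. undefined) (\<lambda>_. undefined) w t = a) as (arity D \<sigma>)"
    proof -
      have "set (arity D \<sigma>) \<subseteq> Srt D" using wf assms unfolding wf_hsig_def by blast
      then show ?thesis using assms(3) unfolding args_in_def list_all2_conv_all_nth
        by (auto intro!: reach_k[OF assms(1) _ _ k])
    qed
    then obtain ts where ts: "\<forall>t\<in>set ts. rigid_trm D (t :: ('f,'k,'k,'s) htrm)"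
      "map (tsort D) ts = map (\<lambda>s. Some (srt_at D (NC k) s)) (arity D \<sigma>)"
      "map (eval W M (\<lambda>_. undefined) (\<lambda>_. undefined) w) ts = as"
      by (blast dest: choose_terms)
    have "reachable_el D W M w (res D \<sigma>) (fint (M w) \<sigma> as)"
      unfolding reachable_el_def
      apply (rule bexI[OF _ k(1)])
      apply (rule conjI)
      using k apply simp
      apply (rule exI[of _ "AtFn (NC k) \<sigma> ts"])
      using ts k nR assms(2) by simp
    then show ?thesis using ru inM False resS assms(1) unfolding replaces_unreachable_def by blast
  qed
qed

lemma nval_in:
  assumes "nterm_ok D k" "fvn_nt k \<subseteq> V" "\<forall>z\<in>V. \<nu> z \<in> Wor W"
  shows "nval W \<nu> k \<in> Wor W"
  using assms kM unfolding kripke_def by (cases k) auto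

lemma term_eq:
  "tsort D t = Some \<tau> \<Longrightarrow> (\<forall>z\<in>fvn_t t. \<nu> z \<in> Wor W) \<Longrightarrow>
   (\<forall>p\<in>fve_t t. \<forall>w'\<in>Wor W. \<mu> p \<in> car (M w') (snd p)) \<Longrightarrow> w \<in> Wor W \<Longrightarrow>
   eval W N \<nu> \<mu> w t = eval W M \<nu> \<mu> w t \<and>
   eval W M \<nu> \<mu> w t \<in> G (fst (hw W \<nu> w \<tau>)) (snd (hw W \<nu> w \<tau>))"
proof (induction t arbitrary: \<tau>)
  case (Var x s)
  then show ?case using G_rigidM[of s w] by (auto simp: hw_def split: if_splits)
next
  case (Fn \<sigma> ts)
  have c: "\<sigma> \<in> Fun D" "map (tsort D) ts = map (\<lambda>s. Some (Here s)) (arity D \<sigma>)" "\<tau> = Here (res D \<sigma>)"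
    using Fn.prems by (auto split: if_splits)
  have len: "length ts = length (arity D \<sigma>)" using c(2) by (metis length_map)
  have ti: "tsort D (ts ! i) = Some (Here (arity D \<sigma> ! i))" if "i < length ts" for i
    using c(2) that len by (metis nth_map)
  have IH: "eval W N \<nu> \<mu> w (ts ! i) = eval W M \<nu> \<mu> w (ts ! i) \<and>
            eval W M \<nu> \<mu> w (ts ! i) \<in> G w (arity D \<sigma> ! i)" if "i < length ts" for i
    using Fn.IH[OF nth_mem[OF that] ti[OF that]] Fn.prems(2,3,4) that
    by (auto simp: hw_def dest!: bspec[where x="ts ! i"] intro: nth_mem)
  have e: "map (eval W N \<nu> \<mu> w) ts = map (eval W M \<nu> \<mu> w) ts"
    using IH by (simp add: list_eq_iff_nth_eq)
  have a: "args_in (G w) (map (eval W M \<nu> \<mu> w) ts) (arity D \<sigma>)"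
    unfolding args_in_def list_all2_conv_all_nth using IH len by simp
  show ?case using closure[OF Fn.prems(4) c(1) a] c(3) by (simp add: hw_def e del: map_eq_conv)
next
  case (AtFn k \<sigma> ts)
  have c: "\<sigma> \<in> Fun D - RFun D" "nterm_ok D k" "map (tsort D) ts = map (\<lambda>s. Some (srt_at D k s)) (arity D \<sigma>)"
     "\<tau> = srt_at D k (res D \<sigma>)"
    using AtFn.prems by (auto split: if_splits)
  define w' where "w' = nval W \<nu> k"
  have w': "w' \<in> Wor W" unfolding w'_def
    by (rule nval_in[OF c(2), of "fvn_t (AtFn k \<sigma> ts)"]) (use AtFn.prems in auto)
  have len: "length ts = length (arity D \<sigma>)" using c(3) by (metis length_map)
  have ti: "tsort D (ts ! i) = Some (srt_at D k (arity D \<sigma> ! i))" if "i < length ts" for i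
    using c(3) that len by (metis nth_map)
  have Gtr: "x \<in> G (fst (hw W \<nu> w (srt_at D k s))) (snd (hw W \<nu> w (srt_at D k s))) \<longleftrightarrow> x \<in> G w' s" for x s
    using G_rigid[OF _ AtFn.prems(4) w'] by (auto simp: hw_def srt_at_def w'_def)
  have IH: "eval W N \<nu> \<mu> w (ts ! i) = eval W M \<nu> \<mu> w (ts ! i) \<and>
            eval W M \<nu> \<mu> w (ts ! i) \<in> G w' (arity D \<sigma> ! i)" if "i < length ts" for i
    using AtFn.IH[OF nth_mem[OF that] ti[OF that]] AtFn.prems(2,3,4) that Gtr
    by (auto dest!: bspec[where x="ts ! i"] intro: nth_mem)
  have e: "map (eval W N \<nu> \<mu> w) ts = map (eval W M \<nu> \<mu> w) ts"
    using IH by (simp add: list_eq_iff_nth_eq)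
  have a: "args_in (G w') (map (eval W M \<nu> \<mu> w) ts) (arity D \<sigma>)"
    unfolding args_in_def list_all2_conv_all_nth using IH len by simp
  have cl: "fint (M w') \<sigma> (map (eval W M \<nu> \<mu> w) ts) \<in> G w' (res D \<sigma>) \<and>
    fint (N w') \<sigma> (map (eval W M \<nu> \<mu> w) ts) = fint (M w') \<sigma> (map (eval W M \<nu> \<mu> w) ts)"
    using closure[OF w' _ a] c(1) by blast
  show ?case using cl c(4) Gtr by (simp add: w'_def e del: map_eq_conv)
qed


lemma terms_eq:
  assumes "map (tsort D) ts = map (\<lambda>s. Some (f s)) ss"
    and "\<forall>z\<in>(\<Union>t\<in>set ts. fvn_t t). \<nu> z \<in> Wor W"
    and "\<forall>p\<in>(\<Union>t\<in>set ts. fve_t t). \<forall>w'\<in>Wor W. \<mu> p \<in> car (M w') (snd p)"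
    and "w \<in> Wor W" and "w' \<in> Wor W"
    and Gtr: "\<And>x s. x \<in> G (fst (hw W \<nu> w (f s))) (snd (hw W \<nu> w (f s))) \<Longrightarrow> x \<in> G w' s"
  shows "map (eval W N \<nu> \<mu> w) ts = map (eval W M \<nu> \<mu> w) ts \<and>
         args_in (G w') (map (eval W M \<nu> \<mu> w) ts) ss"
proof -
  have len: "length ts = length ss" using assms(1) by (metis length_map)
  have ti: "tsort D (ts ! i) = Some (f (ss ! i))" if "i < length ts" for i
    using assms(1) that len by (metis nth_map)
  have IH: "eval W N \<nu> \<mu> w (ts ! i) = eval W M \<nu> \<mu> w (ts ! i) \<and>
            eval W M \<nu> \<mu> w (ts ! i) \<in> G w' (ss ! i)" if "i < length ts" for i
    using term_eq[OF ti[OF that], of \<nu> \<mu> w] assms(2,3,4) that Gtr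
    by (auto dest!: bspec[where x="ts ! i"] intro: nth_mem)
  show ?thesis
    unfolding args_in_def list_all2_conv_all_nth using IH len by (simp add: list_eq_iff_nth_eq)
qed

lemma sat_eq:
  "wf_fm D \<phi> \<Longrightarrow> (\<forall>z\<in>fvn \<phi>. \<nu> z \<in> Wor W) \<Longrightarrow>
   (\<forall>p\<in>fve \<phi>. \<forall>w'\<in>Wor W. \<mu> p \<in> car (M w') (snd p)) \<Longrightarrow> w \<in> Wor W \<Longrightarrow>
   sat W M \<nu> \<mu> w \<phi> = sat W N \<nu> \<mu> w \<phi>"
proof (induction \<phi> arbitrary: \<nu> \<mu> w)
  case (NomA k) then show ?case by simp
next
  case (PropA \<rho>) then show ?case by simp
next
  case (Eq t1 t2)
  obtain \<tau> where "tsort D t1 = Some \<tau>" "tsort D t2 = Some \<tau>" using Eq.prems(1) by (cases "tsort D t1") auto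
  then show ?case using term_eq[of t1 \<tau> \<nu> \<mu> w] term_eq[of t2 \<tau> \<nu> \<mu> w] Eq.prems by auto
next
  case (PredA \<pi> ts)
  have c: "\<pi> \<in> Pred D" "map (tsort D) ts = map (\<lambda>s. Some (Here s)) (parity D \<pi>)" using PredA.prems by auto
  have r: "map (eval W N \<nu> \<mu> w) ts = map (eval W M \<nu> \<mu> w) ts \<and>
         args_in (G w) (map (eval W M \<nu> \<mu> w) ts) (parity D \<pi>)"
    by (rule terms_eq[OF c(2)]) (use PredA.prems in \<open>auto simp: hw_def\<close>)
  then show ?case using ru c(1) PredA.prems(4) unfolding replaces_unreachable_def
    by (simp del: map_eq_conv)
next
  case (AtPredA k \<pi> ts)
  have c: "\<pi> \<in> Pred D" "nterm_ok D k" "map (tsort D) ts = map (\<lambda>s. Some (srt_at D k s)) (parity D \<pi>)"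
    using AtPredA.prems by auto
  define w' where "w' = nval W \<nu> k"
  have w': "w' \<in> Wor W" unfolding w'_def
    by (rule nval_in[OF c(2), of "fvn (AtPredA k \<pi> ts)"]) (use AtPredA.prems in auto)
  have Gtr: "x \<in> G (fst (hw W \<nu> w (srt_at D k s))) (snd (hw W \<nu> w (srt_at D k s))) \<Longrightarrow> x \<in> G w' s" for x s
    using G_rigid[OF _ AtPredA.prems(4) w'] by (auto simp: hw_def srt_at_def w'_def split: if_splits)
  have r: "map (eval W N \<nu> \<mu> w) ts = map (eval W M \<nu> \<mu> w) ts \<and>
         args_in (G w') (map (eval W M \<nu> \<mu> w) ts) (parity D \<pi>)"
    by (rule terms_eq[OF c(3) _ _ _ w' Gtr]) (use AtPredA.prems in auto)
  then show ?case using ru c(1) w' unfolding replaces_unreachable_def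
    by (simp del: map_eq_conv add: w'_def)
next
  case (AtF k \<phi>)
  have "nval W \<nu> k \<in> Wor W"
    by (rule nval_in[of k "fvn (AtF k \<phi>)"]) (use AtF.prems in auto)
  then show ?case using AtF.IH[of \<nu> \<mu> "nval W \<nu> k"] AtF.prems by auto
next
  case (Neg \<phi>) then show ?case by simp
next
  case (Disj \<phi>s)
  then show ?case by simp
next
  case (Store z \<phi>)
  then show ?case using Store.IH[of "\<nu>(z := w)" \<mu> w] by auto
next
  case (ExN z \<phi>)
  have "sat W M (\<nu>(z := v)) \<mu> w \<phi> = sat W N (\<nu>(z := v)) \<mu> w \<phi>" if "v \<in> Wor W" for v
  proof -
    have "\<forall>za\<in>fvn \<phi>. (\<nu>(z := v)) za \<in> Wor W" using ExN.prems that by auto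
    then show ?thesis using ExN.IH[of "\<nu>(z := v)" \<mu> w] ExN.prems by (simp add: fun_upd_def)
  qed
  then show ?case by auto
next
  case (ExV x s \<phi>)
  have sR: "s \<in> RSrt D" using ExV.prems by simp
  have cs: "car (N w) s = car (M w) s" using ru sR ExV.prems(4) unfolding replaces_unreachable_def by auto
  have allw: "a \<in> car (M w') s" if "a \<in> car (M w) s" "w' \<in> Wor W" for a w'
    using kM sR ExV.prems(4) that unfolding kripke_def by blast
  have "sat W M \<nu> (\<mu>((x, s) := a)) w \<phi> = sat W N \<nu> (\<mu>((x, s) := a)) w \<phi>" if "a \<in> car (M w) s" for a
  proof -
    have "\<forall>p\<in>fve \<phi>. \<forall>w'\<in>Wor W. (\<mu>((x, s) := a)) p \<in> car (M w') (snd p)"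
      using ExV.prems that allw by auto
    then show ?thesis using ExV.IH[of \<nu> "\<mu>((x, s) := a)" w] ExV.prems by (simp add: fun_upd_def)
  qed
  then show ?case using cs by auto
next
  case (Dia lm \<phi>)
  have "(w, v) \<in> acc W lm \<Longrightarrow> v \<in> Wor W" for v using kM Dia.prems unfolding kripke_def by auto
  then show ?case using Dia.IH[of \<nu> \<mu>] Dia.prems by auto
qed

end

theorem lemma3p1:
  fixes D :: "('s,'f,'p,'k,'r,'l) hsig"
    and W :: "('k,'r,'l,'w) nstruct"
    and M N :: "'w \<Rightarrow> ('s,'f,'p,'u) fstruct"
  assumes "wf_hsig D"
    and "kripke D W M"
    and "reachable D W M"
    and "kripke D W N"
    and "replaces_unreachable D W M N"
  shows "\<forall>\<phi> :: ('f,'p,'k,'r,'l,'v,'s) hfm. sentence D \<phi> \<longrightarrow> (models W M \<phi> \<longleftrightarrow> models W N \<phi>)"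
proof (intro allI impI)
  fix \<phi> :: "('f,'p,'k,'r,'l,'v,'s) hfm"
  assume s: "sentence D \<phi>"
  interpret hsetup D W M N using assms by unfold_locales
  show "models W M \<phi> \<longleftrightarrow> models W N \<phi>"
    unfolding models_def using sat_eq[of \<phi>] s unfolding sentence_def by auto
qed

end
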